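(* For all integers $n \geq k \geq 1$ there exists an oriented graph on $n$ vertices with exactly $k$ weak kings.
   Context: An oriented graph is a digraph with no loops and no pair of symmetric arcs. For vertices $u,v$ write $u(1\text{-}0)v$ if there is an arc from $u$ to $v$, and $u(0\text{-}0)v$ if there is no arc between $u$ and $v$. A vertex $v$ is weakly reachable within two steps from $u$ if $u(1\text{-}0)v$, or $u(0\text{-}0)v$, or for some vertex $w$ one has $u(1\text{-}0)w(1\text{-}0)v$, or $u(1\text{-}0)w(0\text{-}0)v$, or $u(0\text{-}0)w(1\text{-}0)v$. A vertex $u$ of an oriented graph $D$ is a weak king if every other vertex of $D$ is weakly reachable within two steps from $u$. *)

theory Defs
  imports Main
begin

definition oriented_graph :: "'a set \<Rightarrow> ('a \<times> 'a) set \<Rightarrow> bool" where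
  "oriented_graph V A \<longleftrightarrow> A \<subseteq> V \<times> V \<and> (\<forall>v. (v, v) \<notin> A)
     \<and> (\<forall>u v. (u, v) \<in> A \<longrightarrow> (v, u) \<notin> A)"

definition arc10 :: "('a \<times> 'a) set \<Rightarrow> 'a \<Rightarrow> 'a \<Rightarrow> bool" where
  "arc10 A u v \<longleftrightarrow> (u, v) \<in> A"

definition arc00 :: "('a \<times> 'a) set \<Rightarrow> 'a \<Rightarrow> 'a \<Rightarrow> bool" where
  "arc00 A u v \<longleftrightarrow> (u, v) \<notin> A \<and> (v, u) \<notin> A"

definition weakly_reachable2 :: "'a set \<Rightarrow> ('a \<times> 'a) set \<Rightarrow> 'a \<Rightarrow> 'a \<Rightarrow> bool" where
  "weakly_reachable2 V A u v \<longleftrightarrow>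
     arc10 A u v \<or> arc00 A u v \<or>
     (\<exists>w\<in>V. (arc10 A u w \<and> arc10 A w v) \<or> (arc10 A u w \<and> arc00 A w v)
            \<or> (arc00 A u w \<and> arc10 A w v))"

definition weak_king :: "'a set \<Rightarrow> ('a \<times> 'a) set \<Rightarrow> 'a \<Rightarrow> bool" where
  "weak_king V A u \<longleftrightarrow> u \<in> V \<and> (\<forall>v\<in>V. v \<noteq> u \<longrightarrow> weakly_reachable2 V A u v)"

end

theory Submission
  imports Defs
begin

theorem theorem7:
  fixes n k :: nat
  assumes "1 \<le> k" and "k \<le> n"
  shows "\<exists>(V :: nat set) A. finite V \<and> card V = n \<and> oriented_graph V A
           \<and> card {u \<in> V. weak_king V A u} = k"
proof -
  define A where "A = {(0::nat, x) | x. k \<le> x \<and> x < n}"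
  have og: "oriented_graph {0..<n} A"
    using assms unfolding oriented_graph_def A_def by auto
  have K: "{u \<in> {0..<n}. weak_king {0..<n} A u} = {0..<k}"
  proof (intro set_eqI iffI)
    fix u assume "u \<in> {u \<in> {0..<n}. weak_king {0..<n} A u}"
    hence u: "u < n" "weak_king {0..<n} A u" by auto
    show "u \<in> {0..<k}"
    proof (rule ccontr)
      assume "u \<notin> {0..<k}"
      hence "k \<le> u" by auto
      hence "0 \<noteq> u" using assms by auto
      hence "weakly_reachable2 {0..<n} A u 0"
        using u assms unfolding weak_king_def by auto
      thus False using \<open>k \<le> u\<close> u(1) assms
        unfolding weakly_reachable2_def arc10_def arc00_def A_def by auto
    qed
  next
    fix u assume "u \<in> {0..<k}"
    hence u: "u < k" by auto
    have "weakly_reachable2 {0..<n} A u v" if "v < n" "v \<noteq> u" for v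
    proof (cases "u = 0")
      case True
      then show ?thesis using that u
        unfolding weakly_reachable2_def arc10_def arc00_def A_def by auto
    next
      case False
      then show ?thesis using that u
        unfolding weakly_reachable2_def arc10_def arc00_def A_def by auto
    qed
    thus "u \<in> {u \<in> {0..<n}. weak_king {0..<n} A u}"
      using u assms unfolding weak_king_def by auto
  qed
  show ?thesis
    by (rule exI[of _ "{0..<n}"], rule exI[of _ A]) (simp only: og K finite_atLeastLessThan card_atLeastLessThan, simp)
qed

end
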